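(* For all integers $k\ge 1$ and $n\ge \max(k,2)$, $$G_k(n) > 2^n\left(2^{\binom nk}-n\,2^{\binom{n-1}{k}}\right).$$ More precisely: for each choice of literals $y_i\in\{x_i,\bar x_i\}$ ($i=1,\dots,n$), every nonempty set of $k$-clauses, each built only from literals among $y_1,\dots,y_n$, and such that every $y_i$ occurs in some clause, defines a $k$-SAT function, and distinct pairs (choice of $(y_i)$, such set of clauses) define distinct functions.
   Context: Variables $X_n=\{x_1,\dots,x_n\}$; literals $x_i$ and $\bar x_i$. A $k$-clause is a conjunction of $k$ literals on $k$ distinct variables; a $k$-SAT formula is a disjunction of $k$-clauses, and the Boolean functions so defined are $k$-SAT functions. $G_k(n)$ is the number of $k$-SAT functions of $n$ variables. *)

theory Defs
  imports "HOL-Library.FuncSet"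
begin

text \<open>Variables x_1..x_n are indexed by 0..n-1. A literal is a pair (i, b):
  (i, True) is x_i and (i, False) is its negation. An assignment of the n
  variables is the set of indices of the variables set to true (a subset of
  {..<n}); a Boolean function of n variables is its set of true points.\<close>

type_synonym lit = "nat \<times> bool"

definition lit_val :: "nat set \<Rightarrow> lit \<Rightarrow> bool" where
  "lit_val A l = ((fst l \<in> A) = snd l)"

definition is_kclause :: "nat \<Rightarrow> nat \<Rightarrow> lit set \<Rightarrow> bool" where
  "is_kclause n k C \<longleftrightarrow> card C = k \<and> inj_on fst C \<and> fst ` C \<subseteq> {..<n}"

definition clause_sat :: "nat set \<Rightarrow> lit set \<Rightarrow> bool" where
  "clause_sat A C \<longleftrightarrow> (\<forall>l\<in>C. lit_val A l)"

definition formula_fun :: "nat \<Rightarrow> lit set set \<Rightarrow> nat set set" where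
  "formula_fun n F = {A \<in> Pow {..<n}. \<exists>C\<in>F. clause_sat A C}"

definition is_kSAT_formula :: "nat \<Rightarrow> nat \<Rightarrow> lit set set \<Rightarrow> bool" where
  "is_kSAT_formula n k F \<longleftrightarrow> F \<noteq> {} \<and> (\<forall>C\<in>F. is_kclause n k C)"

definition kSAT_functions :: "nat \<Rightarrow> nat \<Rightarrow> nat set set set" where
  "kSAT_functions k n = {formula_fun n F | F. is_kSAT_formula n k F}"

definition G :: "nat \<Rightarrow> nat \<Rightarrow> nat" where
  "G k n = card (kSAT_functions k n)"

definition admissible :: "nat \<Rightarrow> nat \<Rightarrow> (nat \<Rightarrow> bool) \<Rightarrow> lit set set \<Rightarrow> bool" where
  "admissible k n s F \<longleftrightarrow> F \<noteq> {} \<and>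
     (\<forall>C\<in>F. is_kclause n k C \<and> C \<subseteq> {(i, s i) | i. i < n}) \<and>
     (\<forall>i<n. \<exists>C\<in>F. (i, s i) \<in> C)"

end

theory Submission
  imports Defs
begin

definition Yl :: "nat \<Rightarrow> (nat \<Rightarrow> bool) \<Rightarrow> lit set" where
  "Yl n s = {(i, s i) | i. i < n}"

definition asg :: "nat \<Rightarrow> (nat \<Rightarrow> bool) \<Rightarrow> nat set \<Rightarrow> nat set" where
  "asg n s I = {i. i < n \<and> ((i \<in> I) = s i)}"

definition emb :: "(nat \<Rightarrow> bool) \<Rightarrow> nat set \<Rightarrow> lit set" where
  "emb s I = (\<lambda>j. (j, s j)) ` I"

definition cl :: "nat \<Rightarrow> (nat \<Rightarrow> bool) \<Rightarrow> nat set \<Rightarrow> lit set set" where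
  "cl k s S = emb s ` {I. I \<subseteq> S \<and> card I = k}"

lemma sub_Y: "C \<subseteq> Yl n s \<Longrightarrow> C = emb s (fst ` C)"
  unfolding Yl_def emb_def by force

lemma sat_asg: "C \<subseteq> Yl n s \<Longrightarrow> clause_sat (asg n s I) C \<longleftrightarrow> fst ` C \<subseteq> I"
  unfolding clause_sat_def lit_val_def Yl_def asg_def
proof (intro iffI subsetI)
  fix x assume C: "C \<subseteq> {(i, s i) |i. i < n}" and h: "\<forall>l\<in>C. (fst l \<in> {i. i < n \<and> (i \<in> I) = s i}) = snd l"
   and x: "x \<in> fst ` C"
  then obtain b where xb: "(x,b) \<in> C" by force
  then have "b = s x" "x < n" using C by auto
  then show "x \<in> I" using h xb by fastforce
next
  assume C: "C \<subseteq> {(i, s i) |i. i < n}" "fst ` C \<subseteq> I"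
  show "\<forall>l\<in>C. (fst l \<in> {i. i < n \<and> (i \<in> I) = s i}) = snd l"
  proof
    fix l assume "l \<in> C"
    then obtain i where "l = (i, s i)" "i < n" "i \<in> I" using C by force
    then show "(fst l \<in> {i. i < n \<and> (i \<in> I) = s i}) = snd l" by simp
  qed
qed

lemma card_fst: "is_kclause n k C \<Longrightarrow> card (fst ` C) = k"
  unfolding is_kclause_def by (simp add: card_image)

lemma adm_sub: "admissible k n s F \<Longrightarrow> C \<in> F \<Longrightarrow> C \<subseteq> Yl n s"
  unfolding admissible_def Yl_def by blast

lemma adm_kc: "admissible k n s F \<Longrightarrow> C \<in> F \<Longrightarrow> is_kclause n k C"
  unfolding admissible_def by blast

lemma asg_pow: "asg n s I \<in> Pow {..<n}"
  unfolding asg_def by auto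

lemma same_s_sub:
  assumes a: "admissible k n s F" and b: "admissible k n s F'"
    and e: "formula_fun n F = formula_fun n F'" and C: "C \<in> F"
  shows "C \<in> F'"
proof -
  let ?A = "asg n s (fst ` C)"
  have "?A \<in> formula_fun n F"
    unfolding formula_fun_def using asg_pow sat_asg[OF adm_sub[OF a C]] C by blast
  then have "?A \<in> formula_fun n F'" using e by simp
  then obtain C' where C': "C' \<in> F'" "clause_sat ?A C'"
    unfolding formula_fun_def by auto
  have sub: "fst ` C' \<subseteq> fst ` C" using sat_asg[OF adm_sub[OF b C'(1)]] C'(2) by blast
  have "card (fst ` C') = card (fst ` C)"
    using card_fst[OF adm_kc[OF b C'(1)]] card_fst[OF adm_kc[OF a C]] by simp
  moreover have "finite (fst ` C)"
    using card_fst[OF adm_kc[OF a C]] adm_kc[OF a C] unfolding is_kclause_def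
    by (meson finite_lessThan finite_subset)
  ultimately have "fst ` C' = fst ` C" using sub card_subset_eq by metis
  then have "C' = C" using sub_Y[OF adm_sub[OF b C'(1)]] sub_Y[OF adm_sub[OF a C]] by metis
  then show ?thesis using C' by simp
qed

lemma inj_part:
  assumes k: "k \<ge> 1"
    and s: "s \<in> {..<n} \<rightarrow>\<^sub>E (UNIV :: bool set)" and s': "s' \<in> {..<n} \<rightarrow>\<^sub>E (UNIV :: bool set)"
    and a: "admissible k n s F" and b: "admissible k n s' F'"
    and e: "formula_fun n F = formula_fun n F'"
  shows "s = s' \<and> F = F'"
proof -
  have all: "\<forall>i<n. s i = s' i"
  proof (rule ccontr)
    assume "\<not> (\<forall>i<n. s i = s' i)"
    then obtain i where i: "i < n" "s i \<noteq> s' i" by blast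
    obtain C where C: "C \<in> F" "(i, s i) \<in> C" using a i(1) unfolding admissible_def by blast
    define I where "I = fst ` C"
    have iI: "i \<in> I" using C unfolding I_def by force
    have cI: "card I = k" using card_fst[OF adm_kc[OF a C(1)]] I_def by simp
    have fI: "finite I"
      using adm_kc[OF a C(1)] unfolding is_kclause_def I_def
      by (meson finite_lessThan finite_subset)
    define A1 where "A1 = asg n s I"
    define A0 where "A0 = asg n s (I - {i})"
    have A1: "A1 \<in> formula_fun n F"
      using asg_pow sat_asg[OF adm_sub[OF a C(1)]] C unfolding formula_fun_def A1_def I_def by blast
    have A0: "A0 \<notin> formula_fun n F"
    proof
      assume "A0 \<in> formula_fun n F"
      then obtain C' where C': "C' \<in> F" "clause_sat A0 C'" unfolding formula_fun_def by auto
      have "fst ` C' \<subseteq> I - {i}" using sat_asg[OF adm_sub[OF a C'(1)], where I="I - {i}"] C'(2) unfolding A0_def by simp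
      then have "card (fst ` C') \<le> card (I - {i})" using fI by (simp add: card_mono)
      moreover have "card (I - {i}) = k - 1" using card_Diff_singleton[OF iI] cI by simp
      ultimately have "k \<le> k - 1" using card_fst[OF adm_kc[OF a C'(1)]] by simp
      then show False using k by simp
    qed
    from A1 e have "A1 \<in> formula_fun n F'" by simp
    then obtain C' where C': "C' \<in> F'" "clause_sat A1 C'" unfolding formula_fun_def by auto
    have "clause_sat A0 C'"
      unfolding clause_sat_def
    proof
      fix l assume l: "l \<in> C'"
      then obtain j where j: "l = (j, s' j)" "j < n" using adm_sub[OF b C'(1)] unfolding Yl_def by blast
      have lv: "lit_val A1 l" using C'(2) l unfolding clause_sat_def by blast
      show "lit_val A0 l"
      proof (cases "j = i")
        case True
        then have "(i \<in> A1) = s' i" using lv j unfolding lit_val_def by simp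
        moreover have "(i \<in> A1) = s i" using iI i(1) unfolding A1_def asg_def by simp
        ultimately show ?thesis using i(2) by simp
      next
        case False
        then have "(j \<in> A0) = (j \<in> A1)" unfolding A0_def A1_def asg_def by auto
        then show ?thesis using lv j unfolding lit_val_def by simp
      qed
    qed
    then have "A0 \<in> formula_fun n F'"
      using C'(1) asg_pow unfolding formula_fun_def A0_def by blast
    then show False using A0 e by simp
  qed
  have ss: "s = s'"
  proof
    fix x show "s x = s' x"
      using all PiE_arb[OF s, of x] PiE_arb[OF s', of x] by (cases "x < n") auto
  qed
  have "F = F'" using same_s_sub[OF a b[folded ss] e] same_s_sub[OF b[folded ss] a e[symmetric]] by blast
  then show ?thesis using ss by simp
qed


lemma fst_emb: "fst ` emb s I = I"
  unfolding emb_def by force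

lemma card_emb: "card (emb s I) = card I"
  unfolding emb_def by (rule card_image) (auto simp: inj_on_def)

lemma card_cl: "finite S \<Longrightarrow> card (cl k s S) = card S choose k"
proof -
  assume f: "finite S"
  have "inj_on (emb s) {I. I \<subseteq> S \<and> card I = k}"
    by (rule inj_onI) (metis fst_emb)
  then show ?thesis unfolding cl_def using f by (simp add: card_image n_subsets)
qed

lemma finite_cl: "finite S \<Longrightarrow> finite (cl k s S)"
proof -
  assume f: "finite S"
  have "{I. I \<subseteq> S \<and> card I = k} \<subseteq> Pow S" by auto
  then have "finite {I. I \<subseteq> S \<and> card I = k}" using f finite_subset by blast
  then show ?thesis unfolding cl_def by simp
qed

lemma cl_iff: "(C \<subseteq> Yl n s \<and> is_kclause n k C) \<longleftrightarrow> C \<in> cl k s {..<n}"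
proof
  assume h: "C \<subseteq> Yl n s \<and> is_kclause n k C"
  then have "C = emb s (fst ` C)" using sub_Y by blast
  moreover have "fst ` C \<subseteq> {..<n}" "card (fst ` C) = k" using h card_fst unfolding is_kclause_def by auto
  ultimately show "C \<in> cl k s {..<n}" unfolding cl_def by blast
next
  assume "C \<in> cl k s {..<n}"
  then obtain I where I: "C = emb s I" "I \<subseteq> {..<n}" "card I = k" unfolding cl_def by blast
  have "C \<subseteq> Yl n s" using I unfolding emb_def Yl_def by auto
  moreover have "is_kclause n k C"
    unfolding is_kclause_def using I card_emb[of s I] fst_emb[of s I]
    by (auto simp: emb_def inj_on_def)
  ultimately show "C \<subseteq> Yl n s \<and> is_kclause n k C" by blast
qed

lemma adm_iff: "admissible k n s F \<longleftrightarrow>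
   F \<subseteq> cl k s {..<n} \<and> F \<noteq> {} \<and> (\<forall>i<n. \<exists>C\<in>F. (i, s i) \<in> C)"
  unfolding admissible_def using cl_iff[of _ n s k] unfolding Yl_def by blast

lemma miss:
  assumes "F \<subseteq> cl k s {..<n}" "\<forall>C\<in>F. (i, s i) \<notin> C"
  shows "F \<subseteq> cl k s ({..<n} - {i})"
proof
  fix C assume C: "C \<in> F"
  then obtain I where I: "C = emb s I" "I \<subseteq> {..<n}" "card I = k" using assms(1) unfolding cl_def by blast
  have "i \<notin> I" using assms(2) C I(1) unfolding emb_def by auto
  then show "C \<in> cl k s ({..<n} - {i})" using I unfolding cl_def by blast
qed

lemma count_adm:
  assumes n: "n \<ge> 2"
  shows "int (card {F. admissible k n s F}) \<ge> 2 ^ (n choose k) - int n * 2 ^ ((n - 1) choose k) + 1"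
proof -
  define P where "P = Pow (cl k s {..<n})"
  define M where "M i = Pow (cl k s ({..<n} - {i})) - {{}}" for i
  define Ad where "Ad = {F. admissible k n s F}"
  have fP: "finite P" unfolding P_def by (simp add: finite_cl)
  have AdP: "Ad \<subseteq> P" unfolding Ad_def P_def using adm_iff by blast
  have fAd: "finite Ad" using fP AdP finite_subset by blast
  have fM: "finite (M i)" for i unfolding M_def by (simp add: finite_cl)
  have cM: "card (M i) = 2 ^ ((n - 1) choose k) - 1" if "i < n" for i
  proof -
    have "card (Pow (cl k s ({..<n} - {i}))) = 2 ^ ((n - 1) choose k)"
      using that by (simp add: card_Pow finite_cl card_cl)
    then show ?thesis unfolding M_def by (simp add: card_Diff_singleton)
  qed
  have cP: "card (P - {{}}) = 2 ^ (n choose k) - 1"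
    unfolding P_def by (simp add: card_Pow finite_cl card_cl card_Diff_singleton)
  have sub: "P - {{}} \<subseteq> Ad \<union> (\<Union>i<n. M i)"
  proof
    fix F assume F: "F \<in> P - {{}}"
    show "F \<in> Ad \<union> (\<Union>i<n. M i)"
    proof (cases "\<forall>i<n. \<exists>C\<in>F. (i, s i) \<in> C")
      case True
      then show ?thesis using F adm_iff unfolding Ad_def P_def by blast
    next
      case False
      then obtain i where i: "i < n" "\<forall>C\<in>F. (i, s i) \<notin> C" by blast
      have "F \<subseteq> cl k s {..<n}" using F unfolding P_def by blast
      then have "F \<subseteq> cl k s ({..<n} - {i})" using miss i(2) by blast
      then have "F \<in> M i" using F unfolding M_def by blast
      then show ?thesis using i(1) by blast
    qed
  qed
  have "card (P - {{}}) \<le> card (Ad \<union> (\<Union>i<n. M i))"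
    by (rule card_mono) (use fAd fM sub in auto)
  also have "\<dots> \<le> card Ad + card (\<Union>i<n. M i)" by (rule card_Un_le)
  also have "card (\<Union>i<n. M i) \<le> (\<Sum>i<n. card (M i))" by (rule card_UN_le) simp
  also have "(\<Sum>i<n. card (M i)) = n * (2 ^ ((n - 1) choose k) - 1)" using cM by simp
  finally have ineq: "2 ^ (n choose k) - 1 \<le> card Ad + n * (2 ^ ((n - 1) choose k) - 1)"
    using cP by simp
  have p1: "(1::nat) \<le> 2 ^ (n choose k)" "(1::nat) \<le> 2 ^ ((n - 1) choose k)" by simp_all
  have "int (2 ^ (n choose k) - 1) \<le> int (card Ad + n * (2 ^ ((n - 1) choose k) - 1))"
    using ineq by linarith
  then have "2 ^ (n choose k) - 1 \<le> int (card Ad) + int n * (2 ^ ((n - 1) choose k) - 1)"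
    using p1 by (simp add: of_nat_diff)
  then show ?thesis unfolding Ad_def using n by (simp add: algebra_simps)
qed

theorem mainTheorem3:
  fixes k n :: nat
  assumes "k \<ge> 1" and "n \<ge> max k 2"
  shows "int (G k n) > 2 ^ n * (2 ^ (n choose k) - int n * 2 ^ ((n - 1) choose k))
    \<and> (\<forall>s F. s \<in> {..<n} \<rightarrow>\<^sub>E (UNIV :: bool set) \<and> admissible k n s F
           \<longrightarrow> formula_fun n F \<in> kSAT_functions k n)
    \<and> inj_on (\<lambda>(s, F). formula_fun n F)
        {(s, F). s \<in> {..<n} \<rightarrow>\<^sub>E (UNIV :: bool set) \<and> admissible k n s F}"
  proof -
  define S where "S = {..<n} \<rightarrow>\<^sub>E (UNIV :: bool set)"
  define Ad where "Ad s = {F. admissible k n s F}" for s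
  define Pairs where "Pairs = {(s, F). s \<in> {..<n} \<rightarrow>\<^sub>E (UNIV :: bool set) \<and> admissible k n s F}"
  define f where "f = (\<lambda>(s::nat\<Rightarrow>bool, F). formula_fun n F)"
  define X :: int where "X = 2 ^ (n choose k) - int n * 2 ^ ((n - 1) choose k)"
  have n2: "n \<ge> 2" and k1: "k \<ge> 1" using assms by auto
  have P2: "\<forall>s F. s \<in> {..<n} \<rightarrow>\<^sub>E (UNIV :: bool set) \<and> admissible k n s F
           \<longrightarrow> formula_fun n F \<in> kSAT_functions k n"
    unfolding kSAT_functions_def is_kSAT_formula_def admissible_def by blast
  have P3: "inj_on f Pairs"
  proof (rule inj_onI)
    fix p q assume p: "p \<in> Pairs" and q: "q \<in> Pairs" and e: "f p = f q"
    obtain s F where sF: "p = (s, F)" by (cases p)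
    obtain s' F' where sF': "q = (s', F')" by (cases q)
    show "p = q"
      using inj_part[OF k1, of s n s' F F'] p q e unfolding sF sF' Pairs_def f_def by simp
  qed
  have PS: "Pairs = Sigma S Ad" unfolding Pairs_def S_def Ad_def by auto
  have fS: "finite S" unfolding S_def by (simp add: finite_PiE)
  have cS: "card S = 2 ^ n" unfolding S_def by (simp add: card_PiE)
  have fAd: "finite (Ad s)" for s
  proof -
    have "Ad s \<subseteq> Pow (cl k s {..<n})" unfolding Ad_def using adm_iff by blast
    then show ?thesis using finite_cl[of "{..<n}" k s] finite_subset by blast
  qed
  have cPairs: "card Pairs = (\<Sum>s\<in>S. card (Ad s))" unfolding PS using fS fAd by simp
  have fK: "finite (kSAT_functions k n)"
  proof -
    have "kSAT_functions k n \<subseteq> Pow (Pow {..<n})"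
      unfolding kSAT_functions_def formula_fun_def by auto
    then show ?thesis using finite_subset by blast
  qed
  have imgK: "f ` Pairs \<subseteq> kSAT_functions k n" using P2 unfolding Pairs_def f_def by auto
  have "card Pairs = card (f ` Pairs)" using P3 by (simp add: card_image)
  also have "\<dots> \<le> G k n" unfolding G_def using imgK fK by (rule card_mono[rotated])
  finally have GP: "card Pairs \<le> G k n" .
  have "int (card Pairs) = (\<Sum>s\<in>S. int (card (Ad s)))" unfolding cPairs by simp
  also have "\<dots> \<ge> (\<Sum>s\<in>S. X + 1)"
    by (rule sum_mono) (use count_adm[OF n2] in \<open>simp add: Ad_def X_def\<close>)
  finally have "int (card Pairs) \<ge> 2 ^ n * (X + 1)" using cS by simp
  moreover have "int (card Pairs) \<le> int (G k n)" using GP by simp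
  moreover have "(2::int) ^ n * X < 2 ^ n * (X + 1)" by simp
  ultimately have P1: "int (G k n) > 2 ^ n * X" by linarith
  show ?thesis using P1 P2 P3 unfolding X_def f_def Pairs_def by blast
qed

end
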